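(* Let $a>0$ and for $j\ge0$ put $$g_j=\Big(\frac a2\Big)^j\frac{(2j)!}{2^j\,j!\,j!}.$$ Then for every $j\ge5$, $$g_j\ \ge\ \frac1j\sum_{k=1}^{\lfloor (j-1)/2\rfloor}\ \sum_{j_1+\dots+j_k=j-k-1}\Big(\frac a2\Big)^{k+1}\frac{(k+1)(k+2)}{2}\prod_{p=1}^k\frac{g_{j_p}}{j_p+1},$$ where the inner sum is over ordered $k$-tuples $(j_1,\dots,j_k)$ of positive integers with $j_1+\dots+j_k=j-k-1$.
   Context: Here $\lfloor\cdot\rfloor$ denotes the integer part. Equivalently $g_j=(a/2)^j\frac{1\cdot3\cdots(2j-1)}{j!}$, the Taylor coefficients of $(1-at)^{-1/2}=\sum_{j\ge0}g_jt^j$. *)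

theory Defs
  imports "HOL-Analysis.Analysis"
begin

definition g :: "real \<Rightarrow> nat \<Rightarrow> real" where
  "g a j = (a/2)^j * fact (2*j) / (2^j * fact j * fact j)"

definition compositions :: "nat \<Rightarrow> nat \<Rightarrow> (nat \<Rightarrow> nat) set" where
  "compositions k n = {js \<in> {1..k} \<rightarrow>\<^sub>E {1..n}. (\<Sum>p=1..k. js p) = n}"

end

theory Submission
  imports Defs
begin

definition bb :: "nat \<Rightarrow> real" where
  "bb m = fact (2*m) / (fact m * fact m * 4^m)"

definition ee :: "nat \<Rightarrow> real" where
  "ee m = bb m / (m+1)"

lemma bb_pos: "bb m > 0"
  unfolding bb_def by simp

lemma ee_nonneg: "ee m \<ge> 0"
  unfolding ee_def using bb_pos[of m] by simp

lemma bb_Suc: "bb (Suc m) = bb m * (2*m+1) / (2*m+2)"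
proof -
  have f: "fact (2 * Suc m) = (real (2*m+2) * (2*m+1)) * (fact (2*m) :: real)"
    by (simp add: fact_Suc algebra_simps)
  have g: "fact (Suc m) = real (m+1) * (fact m :: real)" by simp
  have G: "(fact m :: real) > 0" by simp
  have F: "(fact (2*m) :: real) > 0" by simp
  show ?thesis unfolding bb_def f g
    using G F by (simp add: divide_simps) (simp add: algebra_simps)
qed

lemma bb_le: "m \<ge> 1 \<Longrightarrow> bb m \<le> 1/2"
proof (induction m rule: nat_induct_at_least)
  case base
  then show ?case by (simp add: bb_def)
next
  case (Suc m)
  have "bb (Suc m) \<le> bb m" unfolding bb_Suc using bb_pos[of m]
    by (simp add: field_simps)
  then show ?case using Suc by simp
qed

lemma ee_le: "m \<ge> 1 \<Longrightarrow> ee m \<le> 1/4"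
proof -
  assume m: "m \<ge> 1"
  have "ee m = bb m / (m+1)" by (simp add: ee_def)
  also have "\<dots> \<le> (1/2) / 2"
    using bb_le[OF m] bb_pos[of m] m by (intro frac_le) auto
  finally show ?thesis by simp
qed

lemma ee_sum: "(\<Sum>m=1..N. ee m) = 1 - 2 * bb (N+1)"
proof (induction N)
  case 0
  then show ?case by (simp add: bb_def)
next
  case (Suc N)
  have "ee (Suc N) = 2 * bb (N+1) - 2 * bb (N+2)"
    unfolding ee_def using bb_Suc[of "N+1"]
    by (simp add: field_simps)
  then show ?case using Suc by simp
qed

lemma ee_sum_le: "(\<Sum>m=1..N. ee m) \<le> 1"
  using ee_sum[of N] bb_pos[of "N+1"] by simp

lemma jbb_mono: "real m * bb m \<le> real (Suc m) * bb (Suc m)"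
  unfolding bb_Suc using bb_pos[of m] by (simp add: field_simps)

lemma jbb: "j \<ge> 4 \<Longrightarrow> 7/8 \<le> real j * bb j"
proof (induction j rule: nat_induct_at_least)
  case base
  then show ?case by (simp add: bb_def fact_numeral)
next
  case (Suc n)
  then show ?case using jbb_mono[of n] by linarith
qed

lemma geo_sum: "(\<Sum>k=1..M. real ((k+1)*(k+2)) / 2^k) = 14 - (real (M^2+7*M+14)) / 2^M"
proof (induction M)
  case 0
  then show ?case by simp
next
  case (Suc M)
  then show ?case by (simp add: field_simps power2_eq_square)
qed

lemma comp_bound:
  assumes k: "k \<ge> 1"
  shows "(\<Sum>js\<in>compositions k n. \<Prod>p=1..k. ee (js p)) \<le> 1/4"
proof -
  let ?C = "compositions k n"
  let ?R = "\<lambda>js. restrict js {2..k}"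
  have Csub: "?C \<subseteq> {1..k} \<rightarrow>\<^sub>E {1..n}" unfolding compositions_def by auto
  have finC: "finite ?C" by (rule finite_subset[OF Csub]) (simp add: finite_PiE)
  have split: "{1..k} = insert 1 {2..k}" using k by auto
  have step1: "(\<Prod>p=1..k. ee (js p)) \<le> 1/4 * (\<Prod>p=2..k. ee (js p))" if "js \<in> ?C" for js
  proof -
    have "js 1 \<in> {1..n}" using that k unfolding compositions_def by auto
    then have "ee (js 1) \<le> 1/4" using ee_le by auto
    moreover have "(\<Prod>p=2..k. ee (js p)) \<ge> 0" by (simp add: prod_nonneg ee_nonneg)
    ultimately have "ee (js 1) * (\<Prod>p=2..k. ee (js p)) \<le> 1/4 * (\<Prod>p=2..k. ee (js p))"
      by (rule mult_right_mono)
    then show ?thesis unfolding split by simp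
  qed
  have inj: "inj_on ?R ?C"
  proof (rule inj_onI)
    fix x y assume x: "x \<in> ?C" and y: "y \<in> ?C" and eq: "?R x = ?R y"
    have e2: "\<And>p. p \<in> {2..k} \<Longrightarrow> x p = y p" 
    proof -
      fix p assume "p \<in> {2..k}"
      moreover have "?R x p = ?R y p" using eq by simp
      ultimately show "x p = y p" by simp
    qed
    have sx: "x 1 + (\<Sum>p=2..k. x p) = n" using x unfolding compositions_def split by simp
    have sy: "y 1 + (\<Sum>p=2..k. y p) = n" using y unfolding compositions_def split by simp
    have "(\<Sum>p=2..k. x p) = (\<Sum>p=2..k. y p)" using e2 by (rule sum.cong[OF refl])
    then have "x 1 = y 1" using sx sy by simp
    then have "\<And>p. p \<in> {1..k} \<Longrightarrow> x p = y p"
    proof -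
      fix p assume p: "p \<in> {1..k}" "x 1 = y 1"
      show "x p = y p"
      proof (cases "p = 1")
        case True then show ?thesis using p by simp
      next
        case False then have "p \<in> {2..k}" using p by auto
        then show ?thesis by (rule e2)
      qed
    qed
    note agree = this
    have xP: "x \<in> {1..k} \<rightarrow>\<^sub>E {1..n}" and yP: "y \<in> {1..k} \<rightarrow>\<^sub>E {1..n}" using x y Csub by auto
    show "x = y" by (rule PiE_ext[OF xP yP agree])
  qed
  have imsub: "?R ` ?C \<subseteq> {2..k} \<rightarrow>\<^sub>E {1..n}" 
  proof
    fix h assume "h \<in> ?R ` ?C"
    then obtain js where js: "js \<in> ?C" "h = ?R js" by auto
    have "js \<in> {1..k} \<rightarrow>\<^sub>E {1..n}" using js Csub by auto
    then have "\<forall>p\<in>{2..k}. js p \<in> {1..n}" by (auto simp: PiE_iff)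
    then show "h \<in> {2..k} \<rightarrow>\<^sub>E {1..n}" using js by (simp add: restrict_PiE_iff)
  qed
  have "(\<Sum>js\<in>?C. \<Prod>p=1..k. ee (js p)) \<le> (\<Sum>js\<in>?C. 1/4 * (\<Prod>p=2..k. ee (js p)))"
    using step1 by (rule sum_mono)
  also have "\<dots> = 1/4 * (\<Sum>js\<in>?C. \<Prod>p=2..k. ee (?R js p))"
    by (simp add: sum_distrib_left)
  also have "(\<Sum>js\<in>?C. \<Prod>p=2..k. ee (?R js p)) = (\<Sum>h\<in>?R ` ?C. \<Prod>p=2..k. ee (h p))"
    using sum.reindex[OF inj, of "\<lambda>h. \<Prod>p=2..k. ee (h p)"] by simp
  also have "\<dots> \<le> (\<Sum>h\<in>{2..k} \<rightarrow>\<^sub>E {1..n}. \<Prod>p=2..k. ee (h p))"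
    by (rule sum_mono2[OF _ imsub]) (auto simp: finite_PiE prod_nonneg ee_nonneg)
  also have "\<dots> = (\<Prod>p=2..k. \<Sum>m=1..n. ee m)"
    by (rule prod_sum_PiE[symmetric]) auto
  also have "\<dots> \<le> (\<Prod>p=2..k. (1::real))"
    by (rule prod_mono) (use ee_sum_le[of n] in \<open>auto simp: sum_nonneg ee_nonneg\<close>)
  finally show ?thesis by simp
qed

lemma g_bb: "g a m = a^m * bb m"
  unfolding g_def bb_def by (simp add: power_divide power_mult_distrib[symmetric] field_simps)

lemma g_ee: "g a m / real (m+1) = a^m * ee m"
  unfolding g_bb ee_def by simp

lemma term_eq:
  assumes js: "js \<in> compositions k (j-k-1)" and kj: "k + 1 \<le> j"
  shows "(a/2)^(k+1) * (real ((k+1)*(k+2)) / 2) * (\<Prod>p=1..k. g a (js p) / real (js p + 1))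
     = a^j * (real ((k+1)*(k+2)) / 2^k) / 4 * (\<Prod>p=1..k. ee (js p))"
proof -
  have s: "(\<Sum>p=1..k. js p) = j-k-1" using js unfolding compositions_def by auto
  have "(\<Prod>p=1..k. g a (js p) / real (js p + 1)) = (\<Prod>p=1..k. a^(js p) * ee (js p))"
    by (rule prod.cong[OF refl]) (rule g_ee)
  also have "\<dots> = a^(\<Sum>p=1..k. js p) * (\<Prod>p=1..k. ee (js p))"
    by (simp add: prod.distrib power_sum)
  also have "\<dots> = a^(j-k-1) * (\<Prod>p=1..k. ee (js p))" using s by simp
  finally have P: "(\<Prod>p=1..k. g a (js p) / real (js p + 1)) = a^(j-k-1) * (\<Prod>p=1..k. ee (js p))" .
  have aj: "a^j = a^(k+1) * a^(j-k-1)" 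
  proof -
    have "j = (k+1) + (j-k-1)" using kj by simp
    then have "a^j = a^((k+1) + (j-k-1))" by (rule arg_cong)
    then show ?thesis by (simp only: power_add)
  qed
  show ?thesis unfolding P aj by (simp add: power_divide field_simps)
qed

theorem mainTheorem7:
  fixes a :: real and j :: nat
  assumes "a > 0" and "j \<ge> 5"
  shows "g a j \<ge> (1 / real j) *
    (\<Sum>k=1..(j-1) div 2. \<Sum>js\<in>compositions k (j-k-1).
        (a/2)^(k+1) * (real ((k+1)*(k+2)) / 2) *
        (\<Prod>p=1..k. g a (js p) / real (js p + 1)))"
proof -
  let ?M = "(j-1) div 2"
  have apos: "a^j > 0" using assms by simp
  have inner: "(\<Sum>js\<in>compositions k (j-k-1).
        (a/2)^(k+1) * (real ((k+1)*(k+2)) / 2) *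
        (\<Prod>p=1..k. g a (js p) / real (js p + 1))) \<le> a^j / 16 * (real ((k+1)*(k+2)) / 2^k)"
    if k: "k \<in> {1..?M}" for k
  proof -
    have kj: "k + 1 \<le> j" using k assms by auto
    have "(\<Sum>js\<in>compositions k (j-k-1).
        (a/2)^(k+1) * (real ((k+1)*(k+2)) / 2) *
        (\<Prod>p=1..k. g a (js p) / real (js p + 1)))
      = (\<Sum>js\<in>compositions k (j-k-1). a^j * (real ((k+1)*(k+2)) / 2^k) / 4 * (\<Prod>p=1..k. ee (js p)))"
      by (rule sum.cong[OF refl]) (rule term_eq[OF _ kj])
    also have "\<dots> = a^j * (real ((k+1)*(k+2)) / 2^k) / 4 * (\<Sum>js\<in>compositions k (j-k-1). \<Prod>p=1..k. ee (js p))"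
      by (simp add: sum_distrib_left)
    also have "\<dots> \<le> a^j * (real ((k+1)*(k+2)) / 2^k) / 4 * (1/4)"
      using comp_bound[of k "j-k-1"] k apos by (intro mult_left_mono) auto
    finally show ?thesis by simp
  qed
  have "(\<Sum>k=1..?M. \<Sum>js\<in>compositions k (j-k-1).
        (a/2)^(k+1) * (real ((k+1)*(k+2)) / 2) *
        (\<Prod>p=1..k. g a (js p) / real (js p + 1)))
     \<le> (\<Sum>k=1..?M. a^j / 16 * (real ((k+1)*(k+2)) / 2^k))"
    by (rule sum_mono) (rule inner)
  also have "\<dots> = a^j / 16 * (\<Sum>k=1..?M. real ((k+1)*(k+2)) / 2^k)"
    by (simp add: sum_distrib_left)
  also have "\<dots> \<le> a^j / 16 * 14"
    using geo_sum[of ?M] apos by (intro mult_left_mono) auto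
  finally have S: "(\<Sum>k=1..?M. \<Sum>js\<in>compositions k (j-k-1).
        (a/2)^(k+1) * (real ((k+1)*(k+2)) / 2) *
        (\<Prod>p=1..k. g a (js p) / real (js p + 1))) \<le> a^j * (7/8)" by simp
  have jpos: "real j > 0" using assms by simp
  have "(1 / real j) * (\<Sum>k=1..?M. \<Sum>js\<in>compositions k (j-k-1).
        (a/2)^(k+1) * (real ((k+1)*(k+2)) / 2) *
        (\<Prod>p=1..k. g a (js p) / real (js p + 1))) \<le> (1 / real j) * (a^j * (7/8))"
    using S jpos by (intro mult_left_mono) auto
  also have "\<dots> \<le> a^j * bb j"
  proof -
    have "7/8 \<le> real j * bb j" using jbb assms by simp
    then have "(7/8) / real j \<le> bb j" using jpos by (simp add: divide_simps algebra_simps)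
    then have "a^j * ((7/8) / real j) \<le> a^j * bb j" using apos by (intro mult_left_mono) auto
    then show ?thesis by simp
  qed
  also have "\<dots> = g a j" by (simp add: g_bb)
  finally show ?thesis .
qed

end
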